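(* Let $\{\eta_n\}_{n\ge1}$ be real random variables, $\eta_n$ defined on a probability space $\Omega_n$, and let $\{\phi_{n,x}\}_{n\ge1,x\in\mathbb R}$ be real random variables with $\phi_{n,x}$ defined on $\Omega_n$. Assume: (1) $0\le\phi_{n,x}\le\phi_{n,y}\le1$ for all $n\ge1$ and $x\le y$; (2) for every $\varepsilon>0$ there is $M>0$ such that for all $n$, $x\in\mathbb R$ and $\omega\in\Omega_n$ with $\eta_n(\omega)-x>M$ we have $\phi_{n,x}(\omega)<\varepsilon$; (3) for every $\varepsilon>0$ there is $M>0$ such that for all $n$, $x\in\mathbb R$ and $\omega\in\Omega_n$ with $\eta_n(\omega)-x<-M$ we have $\phi_{n,x}(\omega)>1-\varepsilon$; (4) there is a constant $c>0$ independent of $n$ such that for all $n$, $x\in\mathbb R$ and $\omega\in\Omega_n$ with $x<\eta_n(\omega)\le x+1$ we have $\phi_{n,x+1}(\omega)-\phi_{n,x}(\omega)\ge c$. Then the sequence of random variables $\{\eta_n\}_{n\ge1}$ and the sequence of non-decreasing functions $\{F_n(x):=\mathbb E\,\phi_{n,x}\}_{n\ge1}$ are asymptotically equivalent.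
   Context: A sequence $\{\eta_n\}_{n\ge1}$ of real random variables spreads if $\lim_{n\to\infty}\sup_{x\in\mathbb R}\mathrm{Prob}\{x<\eta_n\le x+1\}=0$. A sequence $\{F_n\}_{n\ge1}$ of non-decreasing functions $\mathbb R\to\mathbb R$ spreads if $\lim_{n\to\infty}\sup_{x\in\mathbb R}(F_n(x+1)-F_n(x))=0$. A sequence of real random variables $\{\eta_n\}$ and a sequence of non-decreasing functions $\{F_n\}$ are asymptotically equivalent if (i) $\{\eta_n\}$ spreads if and only if $\{F_n\}$ spreads, and (ii) when both spread, $\lim_{n\to\infty}\sup_{x\in\mathbb R}(\mathrm{Prob}\{\eta_n\le x\}-F_n(x))=0$. Two sequences of real random variables $\{\eta_n\},\{\zeta_n\}$ are asymptotically equivalent if $\{\eta_n\}$ spreads iff $\{\zeta_n\}$ spreads, and when both spread $\lim_{n\to\infty}\sup_x(\mathrm{Prob}\{\eta_n\le x\}-\mathrm{Prob}\{\zeta_n\le x\})=0$. The same notions apply to families indexed by other index sets with a limit point in place of $n\to\infty$. *)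

theory Defs
  imports "HOL-Probability.Probability"
begin

definition spreads_rv :: "(nat \<Rightarrow> 'a measure) \<Rightarrow> (nat \<Rightarrow> 'a \<Rightarrow> real) \<Rightarrow> bool" where
  "spreads_rv M eta \<longleftrightarrow>
     (\<lambda>n. SUP x::real. measure (M n) {\<omega> \<in> space (M n). x < eta n \<omega> \<and> eta n \<omega> \<le> x + 1})
       \<longlonglongrightarrow> 0"

definition spreads_fun :: "(nat \<Rightarrow> real \<Rightarrow> real) \<Rightarrow> bool" where
  "spreads_fun F \<longleftrightarrow> (\<lambda>n. SUP x::real. F n (x + 1) - F n x) \<longlonglongrightarrow> 0"

definition asymp_equiv_rv_fun ::
    "(nat \<Rightarrow> 'a measure) \<Rightarrow> (nat \<Rightarrow> 'a \<Rightarrow> real) \<Rightarrow> (nat \<Rightarrow> real \<Rightarrow> real) \<Rightarrow> bool" where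
  "asymp_equiv_rv_fun M eta F \<longleftrightarrow>
     (spreads_rv M eta \<longleftrightarrow> spreads_fun F) \<and>
     (spreads_rv M eta \<and> spreads_fun F \<longrightarrow>
        (\<lambda>n. SUP x::real. measure (M n) {\<omega> \<in> space (M n). eta n \<omega> \<le> x} - F n x)
          \<longlonglongrightarrow> 0)"

end

theory Submission
  imports Defs
begin

lemma count_lemma:
  fixes f :: "'a \<Rightarrow> real"
  assumes P: "prob_space M" and fm: "f \<in> borel_measurable M"
    and s: "\<And>x. measure M {\<omega> \<in> space M. x < f \<omega> \<and> f \<omega> \<le> x + 1} \<le> s"
  shows "measure M {\<omega> \<in> space M. a < f \<omega> \<and> f \<omega> \<le> a + real k} \<le> real k * s"
proof (induction k)
  case 0
  have eq: "{\<omega> \<in> space M. a < f \<omega> \<and> f \<omega> \<le> a + real 0} = {}" by auto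
  have m0: "measure M {\<omega> \<in> space M. a < f \<omega> \<and> f \<omega> \<le> a + real 0} = 0"
    by (rule trans[OF arg_cong[where f="measure M", OF eq] measure_empty])
  have z: "real 0 * s = 0" by simp
  show ?case by (subst m0, subst z, rule order_refl)
next
  case (Suc k)
  have "{\<omega> \<in> space M. a < f \<omega> \<and> f \<omega> \<le> a + real (Suc k)} =
        {\<omega> \<in> space M. a < f \<omega> \<and> f \<omega> \<le> a + real k} \<union>
        {\<omega> \<in> space M. a + real k < f \<omega> \<and> f \<omega> \<le> (a + real k) + 1}" by auto
  moreover have "measure M ({\<omega> \<in> space M. a < f \<omega> \<and> f \<omega> \<le> a + real k} \<union>
        {\<omega> \<in> space M. a + real k < f \<omega> \<and> f \<omega> \<le> (a + real k) + 1}) \<le>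
     measure M {\<omega> \<in> space M. a < f \<omega> \<and> f \<omega> \<le> a + real k} +
     measure M {\<omega> \<in> space M. a + real k < f \<omega> \<and> f \<omega> \<le> (a + real k) + 1}"
    by (rule measure_Un_le; use fm in measurable)
  ultimately show ?case using Suc s[of "a + real k"] by (simp add: algebra_simps)
qed

lemma key_lemma:
  fixes f :: "'a \<Rightarrow> real" and g :: "real \<Rightarrow> 'a \<Rightarrow> real"
  assumes P: "prob_space M" and fm: "f \<in> borel_measurable M"
    and gm: "\<And>x. g x \<in> borel_measurable M"
    and mono01: "\<And>x y \<omega>. \<omega> \<in> space M \<Longrightarrow> x \<le> y \<Longrightarrow> 0 \<le> g x \<omega> \<and> g x \<omega> \<le> g y \<omega> \<and> g y \<omega> \<le> 1"
    and rt: "\<forall>x. \<forall>\<omega>\<in>space M. f \<omega> - x > B \<longrightarrow> g x \<omega> < \<epsilon>"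
    and lt: "\<forall>x. \<forall>\<omega>\<in>space M. f \<omega> - x < - B \<longrightarrow> g x \<omega> > 1 - \<epsilon>"
    and s: "\<And>x. measure M {\<omega> \<in> space M. x < f \<omega> \<and> f \<omega> \<le> x + 1} \<le> s"
    and K: "2*B+2 \<le> real K" and Bp: "B > 0" and ep: "\<epsilon> > 0"
  shows "integral\<^sup>L M (g (x+1)) - integral\<^sup>L M (g x) \<le> \<epsilon> + real K * s"
    and "\<bar>measure M {\<omega> \<in> space M. f \<omega> \<le> x} - integral\<^sup>L M (g x)\<bar> \<le> \<epsilon> + real K * s"
proof -
  interpret prob_space M by (rule P)
  have int: "integrable M (g y)" for y
    by (rule integrable_const_bound[where B=1]) (use mono01[of _ y y] gm in auto)
  define I where "I = {\<omega> \<in> space M. x - B - 1 < f \<omega> \<and> f \<omega> \<le> x + B + 1}"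
  define J where "J = {\<omega> \<in> space M. f \<omega> \<le> x}"
  have Ims: "I \<in> sets M" unfolding I_def using fm by measurable
  have Jms: "J \<in> sets M" unfolding J_def using fm by measurable
  have intI: "integrable M (indicator I :: 'a \<Rightarrow> real)"
    by (rule integrable_const_bound[where B=1]) (use Ims in \<open>auto simp: indicator_def\<close>)
  have intJ: "integrable M (indicator J :: 'a \<Rightarrow> real)"
    by (rule integrable_const_bound[where B=1]) (use Jms in \<open>auto simp: indicator_def\<close>)
  have mI: "measure M I \<le> real K * s"
  proof -
    have "I \<subseteq> {\<omega> \<in> space M. x - B - 1 < f \<omega> \<and> f \<omega> \<le> (x - B - 1) + real K}"
      unfolding I_def using K by auto
    hence "measure M I \<le> measure M {\<omega> \<in> space M. x - B - 1 < f \<omega> \<and> f \<omega> \<le> (x - B - 1) + real K}"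
      by (intro finite_measure_mono) (use fm in measurable)
    also have "\<dots> \<le> real K * s" by (rule count_lemma[OF P fm s])
    finally show ?thesis .
  qed
  have intI': "integral\<^sup>L M (indicator I :: 'a \<Rightarrow> real) = measure M I" using Ims
    by (simp add: Int_absorb2 sets.sets_into_space)
  have intJ': "integral\<^sup>L M (indicator J :: 'a \<Rightarrow> real) = measure M J" using Jms
    by (simp add: Int_absorb2 sets.sets_into_space)
  have p1: "g (x+1) \<omega> - g x \<omega> \<le> \<epsilon> + indicator I \<omega>" if w: "\<omega> \<in> space M" for \<omega>
  proof -
    have a: "0 \<le> g x \<omega>" "g x \<omega> \<le> g (x+1) \<omega>" "g (x+1) \<omega> \<le> 1" using mono01[OF w, of x "x+1"] by auto
    show ?thesis
    proof (cases "\<omega> \<in> I")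
      case True then show ?thesis using a ep by simp
    next
      case False
      hence "f \<omega> > x + B + 1 \<or> f \<omega> \<le> x - B - 1" using w unfolding I_def by auto
      thus ?thesis
      proof
        assume "f \<omega> > x + B + 1"
        hence "g (x+1) \<omega> < \<epsilon>" using rt w by force
        thus ?thesis using a False by simp
      next
        assume "f \<omega> \<le> x - B - 1"
        hence "g x \<omega> > 1 - \<epsilon>" using lt w by force
        thus ?thesis using a False by simp
      qed
    qed
  qed
  have p2: "\<bar>indicator J \<omega> - g x \<omega>\<bar> \<le> \<epsilon> + indicator I \<omega>" if w: "\<omega> \<in> space M" for \<omega>
  proof -
    have a: "0 \<le> g x \<omega>" "g x \<omega> \<le> 1" using mono01[OF w, of x x] by auto
    show ?thesis
    proof (cases "\<omega> \<in> I")
      case True then show ?thesis using a ep by (simp add: indicator_def)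
    next
      case False
      hence "f \<omega> > x + B + 1 \<or> f \<omega> \<le> x - B - 1" using w unfolding I_def by auto
      thus ?thesis
      proof
        assume h: "f \<omega> > x + B + 1"
        hence "g x \<omega> < \<epsilon>" using rt w Bp by force
        moreover have "\<omega> \<notin> J" using h Bp unfolding J_def by auto
        ultimately show ?thesis using a False by simp
      next
        assume h: "f \<omega> \<le> x - B - 1"
        hence "g x \<omega> > 1 - \<epsilon>" using lt w by force
        moreover have "\<omega> \<in> J" using h Bp w unfolding J_def by auto
        ultimately show ?thesis using a False by simp
      qed
    qed
  qed
  have "integral\<^sup>L M (g (x+1)) - integral\<^sup>L M (g x) = integral\<^sup>L M (\<lambda>\<omega>. g (x+1) \<omega> - g x \<omega>)"
    using int by simp
  also have "\<dots> \<le> integral\<^sup>L M (\<lambda>\<omega>. \<epsilon> + indicator I \<omega>)"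
    by (rule integral_mono) (use int intI p1 in auto)
  also have "\<dots> = \<epsilon> + measure M I" using intI intI' by (simp add: prob_space)
  finally show "integral\<^sup>L M (g (x+1)) - integral\<^sup>L M (g x) \<le> \<epsilon> + real K * s" using mI by simp
  have "\<bar>measure M {\<omega> \<in> space M. f \<omega> \<le> x} - integral\<^sup>L M (g x)\<bar> =
        \<bar>integral\<^sup>L M (\<lambda>\<omega>. indicator J \<omega> - g x \<omega>)\<bar>"
    using int intJ intJ' unfolding J_def by simp
  also have "\<dots> \<le> integral\<^sup>L M (\<lambda>\<omega>. \<bar>indicator J \<omega> - g x \<omega>\<bar>)"
    by (rule integral_abs_bound)
  also have "\<dots> \<le> integral\<^sup>L M (\<lambda>\<omega>. \<epsilon> + indicator I \<omega>)"
    by (rule integral_mono) (use int intI intJ p2 in auto)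
  also have "\<dots> = \<epsilon> + measure M I" using intI intI' by (simp add: prob_space)
  finally show "\<bar>measure M {\<omega> \<in> space M. f \<omega> \<le> x} - integral\<^sup>L M (g x)\<bar> \<le> \<epsilon> + real K * s"
    using mI by simp
qed


lemma tend_helper:
  fixes X S :: "nat \<Rightarrow> real"
  assumes S: "S \<longlonglongrightarrow> 0" and E: "\<And>e. e > 0 \<Longrightarrow> \<exists>K::real. \<forall>n. \<bar>X n\<bar> \<le> e + K * \<bar>S n\<bar>"
  shows "X \<longlonglongrightarrow> 0"
proof (rule LIMSEQ_I)
  fix r :: real assume r: "0 < r"
  obtain K where K: "\<forall>n. \<bar>X n\<bar> \<le> r/2 + K * \<bar>S n\<bar>" using E[of "r/2"] r by auto
  have pos: "0 < r / (2 * (\<bar>K\<bar> + 1))" using r by (simp add: add_pos_nonneg)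
  obtain no where no: "\<forall>n\<ge>no. norm (S n - 0) < r / (2 * (\<bar>K\<bar> + 1))"
    using LIMSEQ_D[OF S pos] by blast
  show "\<exists>no. \<forall>n\<ge>no. norm (X n - 0) < r"
  proof (intro exI allI impI)
    fix n assume "no \<le> n"
    hence sn: "\<bar>S n\<bar> < r / (2 * (\<bar>K\<bar> + 1))" using no by simp
    have "(\<bar>K\<bar> + 1) * \<bar>S n\<bar> < (\<bar>K\<bar> + 1) * (r / (2 * (\<bar>K\<bar> + 1)))"
      using sn by (intro mult_strict_left_mono) auto
    also have "\<dots> = r / 2" by (simp add: field_simps add_pos_nonneg)
    finally have a: "(\<bar>K\<bar> + 1) * \<bar>S n\<bar> < r / 2" .
    have b: "K * \<bar>S n\<bar> \<le> (\<bar>K\<bar> + 1) * \<bar>S n\<bar>" by (intro mult_right_mono) auto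
    have "\<bar>X n\<bar> < r" using K[rule_format, of n] a b by linarith
    thus "norm (X n - 0) < r" by simp
  qed
qed



theorem proposition5p3:
  fixes M :: "nat \<Rightarrow> 'a measure"
    and eta :: "nat \<Rightarrow> 'a \<Rightarrow> real"
    and phi :: "nat \<Rightarrow> real \<Rightarrow> 'a \<Rightarrow> real"
  assumes prob: "\<And>n. prob_space (M n)"
    and eta_meas: "\<And>n. eta n \<in> borel_measurable (M n)"
    and phi_meas: "\<And>n x. phi n x \<in> borel_measurable (M n)"
    and mono01: "\<And>n x y \<omega>. \<omega> \<in> space (M n) \<Longrightarrow> x \<le> y \<Longrightarrow>
                   0 \<le> phi n x \<omega> \<and> phi n x \<omega> \<le> phi n y \<omega> \<and> phi n y \<omega> \<le> 1"
    and right_tail: "\<And>\<epsilon>. \<epsilon> > 0 \<Longrightarrow> \<exists>B > 0. \<forall>n x. \<forall>\<omega> \<in> space (M n).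
                   eta n \<omega> - x > B \<longrightarrow> phi n x \<omega> < \<epsilon>"
    and left_tail: "\<And>\<epsilon>. \<epsilon> > 0 \<Longrightarrow> \<exists>B > 0. \<forall>n x. \<forall>\<omega> \<in> space (M n).
                   eta n \<omega> - x < - B \<longrightarrow> phi n x \<omega> > 1 - \<epsilon>"
    and jump: "\<exists>c > 0. \<forall>n x. \<forall>\<omega> \<in> space (M n).
                   x < eta n \<omega> \<and> eta n \<omega> \<le> x + 1 \<longrightarrow> phi n (x + 1) \<omega> - phi n x \<omega> \<ge> c"
  shows "asymp_equiv_rv_fun M eta (\<lambda>n x. integral\<^sup>L (M n) (phi n x))"
proof -
  let ?P = "\<lambda>n x. measure (M n) {\<omega> \<in> space (M n). x < eta n \<omega> \<and> eta n \<omega> \<le> x + 1}"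
  let ?F = "\<lambda>n x. integral\<^sup>L (M n) (phi n x)"
  let ?G = "\<lambda>n x. measure (M n) {\<omega> \<in> space (M n). eta n \<omega> \<le> x}"
  define S where "S n = (SUP x. ?P n x)" for n
  define D where "D n = (SUP x. ?F n (x+1) - ?F n x)" for n
  define H where "H n = (SUP x. ?G n x - ?F n x)" for n
  have intphi: "integrable (M n) (phi n x)" for n x
  proof -
    interpret prob_space "M n" by (rule prob)
    show ?thesis
      by (rule integrable_const_bound[where B=1]) (use mono01[of _ n x x] phi_meas in auto)
  qed
  have P1: "?P n x \<le> 1" for n x using prob_space.prob_le_1[OF prob] by blast
  have G1: "?G n x \<le> 1" for n x using prob_space.prob_le_1[OF prob] by blast
  have P0: "0 \<le> ?P n x" for n x by simp
  have F0: "0 \<le> ?F n x" for n x using mono01[of _ n x x] by (intro integral_nonneg_AE) auto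
  have Fmono: "?F n x \<le> ?F n y" if "x \<le> y" for n x y
    by (rule integral_mono) (use intphi mono01[OF _ that] in auto)
  have F1: "?F n x \<le> 1" for n x
  proof -
    interpret prob_space "M n" by (rule prob)
    have "?F n x \<le> integral\<^sup>L (M n) (\<lambda>_. 1::real)"
      by (rule integral_mono) (use intphi mono01[of _ n x x] in auto)
    thus ?thesis by (simp add: prob_space)
  qed
  have bddP: "bdd_above (range (?P n))" for n using P1 by (intro bdd_aboveI2) auto
  have bddD: "bdd_above (range (\<lambda>x. ?F n (x+1) - ?F n x))" for n
  proof (intro bdd_aboveI2[where M=1])
    fix x show "?F n (x+1) - ?F n x \<le> 1" using F1[of n "x+1"] F0[of n x] by linarith
  qed
  have bddH: "bdd_above (range (\<lambda>x. ?G n x - ?F n x))" for n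
  proof (intro bdd_aboveI2[where M=1])
    fix x show "?G n x - ?F n x \<le> 1" using G1[of n x] F0[of n x] by linarith
  qed
  have PS: "?P n x \<le> S n" for n x unfolding S_def by (rule cSUP_upper[OF _ bddP]) simp
  have DS: "?F n (x+1) - ?F n x \<le> D n" for n x unfolding D_def by (rule cSUP_upper[OF _ bddD]) simp
  have HS: "?G n x - ?F n x \<le> H n" for n x unfolding H_def by (rule cSUP_upper[OF _ bddH]) simp
  have S0: "0 \<le> S n" for n using PS[of n 0] P0[of n 0] by linarith
  have D0: "0 \<le> D n" for n using DS[of n 0] Fmono[of 0 1 n] by simp
  obtain c where c: "c > 0" and cj: "\<forall>n x. \<forall>\<omega> \<in> space (M n).
         x < eta n \<omega> \<and> eta n \<omega> \<le> x + 1 \<longrightarrow> phi n (x + 1) \<omega> - phi n x \<omega> \<ge> c"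
    using jump by blast
  have cP: "c * ?P n x \<le> ?F n (x+1) - ?F n x" for n x
  proof -
    interpret prob_space "M n" by (rule prob)
    let ?A = "{\<omega> \<in> space (M n). x < eta n \<omega> \<and> eta n \<omega> \<le> x + 1}"
    have Ams: "?A \<in> sets (M n)" using eta_meas[of n] by measurable
    have intA: "integrable (M n) (\<lambda>\<omega>. c * indicator ?A \<omega> :: real)"
      using Ams by (intro integrable_mult_right) (rule integrable_const_bound[where B=1], auto simp: indicator_def)
    have "c * ?P n x = integral\<^sup>L (M n) (\<lambda>\<omega>. c * indicator ?A \<omega>)"
      using Ams by (simp add: Int_absorb2 sets.sets_into_space)
    also have "\<dots> \<le> integral\<^sup>L (M n) (\<lambda>\<omega>. phi n (x+1) \<omega> - phi n x \<omega>)"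
    proof (rule integral_mono)
      show "integrable (M n) (\<lambda>\<omega>. phi n (x+1) \<omega> - phi n x \<omega>)" using intphi by simp
      fix \<omega> assume w: "\<omega> \<in> space (M n)"
      show "c * indicator ?A \<omega> \<le> phi n (x+1) \<omega> - phi n x \<omega>"
        using cj w mono01[OF w, of x "x+1"] by (auto simp: indicator_def)
    qed (rule intA)
    also have "\<dots> = ?F n (x+1) - ?F n x" using intphi by simp
    finally show ?thesis .
  qed
  have SD: "S n \<le> D n / c" for n
    unfolding S_def
  proof (rule cSUP_least)
    fix x show "?P n x \<le> D n / c" using cP[of n x] DS[of n x] c by (simp add: field_simps)
  qed simp
  have E: "\<exists>K::real. \<forall>n. D n \<le> e + K * S n \<and> \<bar>H n\<bar> \<le> e + K * S n" if e: "e > 0" for e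
  proof -
    obtain B1 where B1: "B1 > 0" "\<forall>n x. \<forall>\<omega> \<in> space (M n). eta n \<omega> - x > B1 \<longrightarrow> phi n x \<omega> < e"
      using right_tail[OF e] by blast
    obtain B2 where B2: "B2 > 0" "\<forall>n x. \<forall>\<omega> \<in> space (M n). eta n \<omega> - x < - B2 \<longrightarrow> phi n x \<omega> > 1 - e"
      using left_tail[OF e] by blast
    define B where "B = max B1 B2"
    define K where "K = nat \<lceil>2*B+2\<rceil>"
    have K: "2*B+2 \<le> real K" unfolding K_def by linarith
    have Bp: "B > 0" using B1 unfolding B_def by simp
    have rt: "\<forall>x. \<forall>\<omega>\<in>space (M n). eta n \<omega> - x > B \<longrightarrow> phi n x \<omega> < e" for n
      using B1 unfolding B_def by auto
    have lt: "\<forall>x. \<forall>\<omega>\<in>space (M n). eta n \<omega> - x < - B \<longrightarrow> phi n x \<omega> > 1 - e" for n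
      using B2 unfolding B_def by auto
    note kl = key_lemma[OF prob eta_meas phi_meas mono01 rt lt PS K Bp e]
    have "D n \<le> e + real K * S n" for n
      unfolding D_def by (rule cSUP_least) (use kl in auto)
    moreover have "H n \<le> e + real K * S n" for n
      unfolding H_def by (rule cSUP_least) (use kl in \<open>auto simp: abs_le_iff\<close>)
    moreover have "- (e + real K * S n) \<le> H n" for n
      using HS[of n 0] kl(2)[of n 0] by (auto simp: abs_le_iff)
    ultimately have "\<forall>n. D n \<le> e + real K * S n \<and> \<bar>H n\<bar> \<le> e + real K * S n"
      by (metis abs_le_iff minus_le_iff)
    thus ?thesis by blast
  qed
  have spr: "spreads_rv M eta \<longleftrightarrow> S \<longlonglongrightarrow> 0" unfolding spreads_rv_def S_def by simp
  have spf: "spreads_fun ?F \<longleftrightarrow> D \<longlonglongrightarrow> 0" unfolding spreads_fun_def D_def by simp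
  have SD_imp: "S \<longlonglongrightarrow> 0" if "D \<longlonglongrightarrow> 0"
  proof (rule Lim_null_comparison[where g="\<lambda>n. D n / c"])
    show "\<forall>\<^sub>F n in sequentially. norm (S n) \<le> D n / c" using SD S0 by simp
    show "(\<lambda>n. D n / c) \<longlonglongrightarrow> 0" using tendsto_divide_zero[OF that] by simp
  qed
  have DS_imp: "D \<longlonglongrightarrow> 0" if Sl: "S \<longlonglongrightarrow> 0"
  proof (rule tend_helper[OF Sl])
    fix e :: real assume "e > 0"
    then obtain K where "\<forall>n. D n \<le> e + K * S n \<and> \<bar>H n\<bar> \<le> e + K * S n" using E by blast
    thus "\<exists>K. \<forall>n. \<bar>D n\<bar> \<le> e + K * \<bar>S n\<bar>" using D0 S0 by (intro exI[of _ K]) auto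
  qed
  have HS_imp: "H \<longlonglongrightarrow> 0" if Sl: "S \<longlonglongrightarrow> 0"
  proof (rule tend_helper[OF Sl])
    fix e :: real assume "e > 0"
    then obtain K where "\<forall>n. D n \<le> e + K * S n \<and> \<bar>H n\<bar> \<le> e + K * S n" using E by blast
    thus "\<exists>K. \<forall>n. \<bar>H n\<bar> \<le> e + K * \<bar>S n\<bar>" using S0 by (intro exI[of _ K]) auto
  qed
  have Hdef: "(\<lambda>n. SUP x::real. ?G n x - ?F n x) = H" unfolding H_def by simp
  show ?thesis unfolding asymp_equiv_rv_fun_def spr spf Hdef
    using SD_imp DS_imp HS_imp by blast
qed


end
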